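(* Let $F$ be a DQCNF and let $\varphi,\psi$ be autarkies for $F$. Then the composition $\varphi\circ\psi$, defined on $\mathrm{dom}(\varphi)\cup\mathrm{dom}(\psi)$ by $(\varphi\circ\psi)(y)=\psi(y)$ for $y\in\mathrm{dom}(\psi)$ and $(\varphi\circ\psi)(y)=\varphi(y)$ for $y\in\mathrm{dom}(\varphi)\setminus\mathrm{dom}(\psi)$, is again an autarky for $F$.
   Context: A DQCNF $F$ consists of a set $X$ of universal variables, a set $Y$ of existential variables, a dependency set $D_y\subseteq X$ for each $y\in Y$, and a matrix, a finite set of clauses over $X\cup Y$. An autarky for $F$ is a partial map $\varphi$ from a subset $\mathrm{dom}(\varphi)\subseteq Y$ to Boolean functions, where $\varphi(y)$ depends only on variables in $D_y$, such that every clause $C$ of $F$ either contains no variable of $\mathrm{dom}(\varphi)$ (then $\varphi$ does not touch $C$), or becomes a tautology (identically true as a function of all remaining variables) after substituting $\varphi(y)$ for each $y\in\mathrm{dom}(\varphi)$ occurring in $C$. *)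

theory Defs
  imports Main
begin

text \<open>A literal is a pair (variable, polarity); a clause is a
  set of literals; the matrix is a set of clauses.\<close>

type_synonym 'v lit = "'v \<times> bool"
type_synonym 'v clause = "'v lit set"
type_synonym 'v assignment = "'v \<Rightarrow> bool"
type_synonym 'v boolfun = "'v assignment \<Rightarrow> bool"

definition vars_of :: "'v clause \<Rightarrow> 'v set" where
  "vars_of C = fst ` C"

text \<open>A DQCNF (X, Y, D, F): disjoint sets of universal and existential variables,
  dependency sets D y \<subseteq> X, and a finite matrix of finite clauses over X \<union> Y.\<close>

definition dqcnf :: "'v set \<Rightarrow> 'v set \<Rightarrow> ('v \<Rightarrow> 'v set) \<Rightarrow> 'v clause set \<Rightarrow> bool" where
  "dqcnf X Y D F \<longleftrightarrow> X \<inter> Y = {} \<and> (\<forall>y\<in>Y. D y \<subseteq> X) \<and> finite F \<and>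
     (\<forall>C\<in>F. finite C \<and> vars_of C \<subseteq> X \<union> Y)"

definition depends_only_on :: "'v boolfun \<Rightarrow> 'v set \<Rightarrow> bool" where
  "depends_only_on f S \<longleftrightarrow> (\<forall>a b. (\<forall>x\<in>S. a x = b x) \<longrightarrow> f a = f b)"

definition lit_val_subst :: "('v \<rightharpoonup> 'v boolfun) \<Rightarrow> 'v assignment \<Rightarrow> 'v lit \<Rightarrow> bool" where
  "lit_val_subst \<phi> \<alpha> l = ((case \<phi> (fst l) of Some f \<Rightarrow> f \<alpha> | None \<Rightarrow> \<alpha> (fst l)) = snd l)"

definition autarky :: "'v set \<Rightarrow> 'v set \<Rightarrow> ('v \<Rightarrow> 'v set) \<Rightarrow> 'v clause set
    \<Rightarrow> ('v \<rightharpoonup> 'v boolfun) \<Rightarrow> bool" where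
  "autarky X Y D F \<phi> \<longleftrightarrow>
     dom \<phi> \<subseteq> Y \<and>
     (\<forall>y f. \<phi> y = Some f \<longrightarrow> depends_only_on f (D y)) \<and>
     (\<forall>C\<in>F. vars_of C \<inter> dom \<phi> = {} \<or> (\<forall>\<alpha>. \<exists>l\<in>C. lit_val_subst \<phi> \<alpha> l))"

definition autarky_comp :: "('v \<rightharpoonup> 'v boolfun) \<Rightarrow> ('v \<rightharpoonup> 'v boolfun) \<Rightarrow> ('v \<rightharpoonup> 'v boolfun)" where
  "autarky_comp \<phi> \<psi> = (\<lambda>y. case \<psi> y of Some f \<Rightarrow> Some f | None \<Rightarrow> \<phi> y)"

end

theory Submission
  imports Defs
begin

theorem lemma3:
  fixes X Y :: "'v set" and D :: "'v \<Rightarrow> 'v set" and F :: "'v clause set"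
    and \<phi> \<psi> :: "'v \<rightharpoonup> 'v boolfun"
  assumes "dqcnf X Y D F"
    and "autarky X Y D F \<phi>"
    and "autarky X Y D F \<psi>"
  shows "autarky X Y D F (autarky_comp \<phi> \<psi>)"
proof -
  let ?c = "autarky_comp \<phi> \<psi>"
  have XY: "X \<inter> Y = {}" and DY: "\<forall>y\<in>Y. D y \<subseteq> X" using assms(1) by (auto simp: dqcnf_def)
  have p1: "dom \<phi> \<subseteq> Y" and p2: "\<And>y f. \<phi> y = Some f \<Longrightarrow> depends_only_on f (D y)"
   and p3: "\<And>C. C\<in>F \<Longrightarrow> vars_of C \<inter> dom \<phi> = {} \<or> (\<forall>\<alpha>. \<exists>l\<in>C. lit_val_subst \<phi> \<alpha> l)"
    using assms(2) by (auto simp: autarky_def)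
  have q1: "dom \<psi> \<subseteq> Y" and q2: "\<And>y f. \<psi> y = Some f \<Longrightarrow> depends_only_on f (D y)"
   and q3: "\<And>C. C\<in>F \<Longrightarrow> vars_of C \<inter> dom \<psi> = {} \<or> (\<forall>\<alpha>. \<exists>l\<in>C. lit_val_subst \<psi> \<alpha> l)"
    using assms(3) by (auto simp: autarky_def)
  have domc: "dom ?c = dom \<phi> \<union> dom \<psi>"
    by (auto simp: autarky_comp_def split: option.splits)
  have "dom ?c \<subseteq> Y" using domc p1 q1 by auto
  moreover have "\<forall>y f. ?c y = Some f \<longrightarrow> depends_only_on f (D y)"
    using p2 q2 by (auto simp: autarky_comp_def split: option.splits)
  moreover have "\<forall>C\<in>F. vars_of C \<inter> dom ?c = {} \<or> (\<forall>\<alpha>. \<exists>l\<in>C. lit_val_subst ?c \<alpha> l)"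
  proof
    fix C assume C: "C \<in> F"
    show "vars_of C \<inter> dom ?c = {} \<or> (\<forall>\<alpha>. \<exists>l\<in>C. lit_val_subst ?c \<alpha> l)"
    proof (cases "vars_of C \<inter> dom \<psi> = {}")
      case True
      show ?thesis
      proof (cases "vars_of C \<inter> dom \<phi> = {}")
        case True2: True
        then show ?thesis using True domc by auto
      next
        case False
        then have T: "\<forall>\<alpha>. \<exists>l\<in>C. lit_val_subst \<phi> \<alpha> l" using p3 C by auto
        have "\<forall>\<alpha>. \<exists>l\<in>C. lit_val_subst ?c \<alpha> l"
        proof
          fix \<alpha> obtain l where l: "l \<in> C" "lit_val_subst \<phi> \<alpha> l" using T by blast
          have "\<psi> (fst l) = None" using True l(1) by (auto simp: vars_of_def)
          then show "\<exists>l\<in>C. lit_val_subst ?c \<alpha> l" using l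
            by (intro bexI[of _ l]) (auto simp: lit_val_subst_def autarky_comp_def)
        qed
        then show ?thesis by blast
      qed
    next
      case False
      then have T: "\<forall>\<alpha>. \<exists>l\<in>C. lit_val_subst \<psi> \<alpha> l" using q3 C by auto
      have "\<forall>\<alpha>. \<exists>l\<in>C. lit_val_subst ?c \<alpha> l"
      proof
        fix \<alpha>
        define \<beta> where "\<beta> = (\<lambda>v. case \<phi> v of Some f \<Rightarrow> (case \<psi> v of None \<Rightarrow> f \<alpha> | Some _ \<Rightarrow> \<alpha> v) | None \<Rightarrow> \<alpha> v)"
        have agree: "\<forall>x\<in>X. \<beta> x = \<alpha> x"
        proof
          fix x assume "x \<in> X"
          then have "x \<notin> dom \<phi>" using XY p1 by auto
          then show "\<beta> x = \<alpha> x" by (auto simp: \<beta>_def)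
        qed
        have psiD: "\<And>y f. \<psi> y = Some f \<Longrightarrow> f \<beta> = f \<alpha>"
        proof -
          fix y f assume h: "\<psi> y = Some f"
          then have "y \<in> Y" using q1 by auto
          then have "D y \<subseteq> X" using DY by auto
          then show "f \<beta> = f \<alpha>" using q2[OF h] agree
            unfolding depends_only_on_def by blast
        qed
        obtain l where l: "l \<in> C" "lit_val_subst \<psi> \<beta> l" using T by blast
        have "lit_val_subst ?c \<alpha> l"
        proof (cases "\<psi> (fst l)")
          case None
          then show ?thesis using l(2)
            by (auto simp: lit_val_subst_def autarky_comp_def \<beta>_def split: option.splits)
        next
          case (Some f)
          then show ?thesis using l(2) psiD[OF Some]
            by (auto simp: lit_val_subst_def autarky_comp_def)
        qed
        then show "\<exists>l\<in>C. lit_val_subst ?c \<alpha> l" using l(1) by blast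
      qed
      then show ?thesis by blast
    qed
  qed
  ultimately show ?thesis by (simp add: autarky_def)
qed

end
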